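(* For every liner $X$ the following are equivalent: (1) $X$ is $0$-hypoparallel; (2) $X$ is $0$-parallel; (3) any two disjoint lines in $X$ are skew; (4) $X$ is projective; (5) $X$ is strongly regular; (6) $X$ is modular.
   Context: A liner is a set $X$ of points with a family of subsets called lines such that any two distinct points lie in a unique line and every line contains at least two points. For distinct $x,y$, $\overline{xy}$ is the line through them and $\overline{xx}:=\{x\}$. A set is flat if it contains $\overline{xy}$ for all its distinct points; $\overline A$ is the smallest flat containing $A$; the rank $\|A\|$ is the smallest cardinality of $B\subseteq X$ with $A\subseteq\overline B$; a plane is a flat of rank 3. For a cardinal $\kappa$, $X$ is $\kappa$-hypoparallel (resp. $\kappa$-parallel) if for every plane $P$, line $L\subseteq P$ and point $x\in P\setminus L$ there are at most (resp. exactly) $\kappa$ lines $\Lambda$ with $x\in\Lambda\subseteq P\setminus L$. Two lines $A,B$ are skew if $\|A\cup B\|=4$. $X$ is projective if for all $o,x,y\in X$, $p\in\overline{xy}$ and $v\in\overline{oy}\setminus\{p\}$ we have $\overline{vp}\cap\overline{ox}\neq\varnothing$. $X$ is strongly regular if for every nonempty flat $A$ and $b\in X\setminus A$, $\overline{A\cup\{b\}}=\bigcup_{a\in A}\overline{ab}$. $X$ is modular if $\|A\cap B\|+\|A\cup B\|=\|A\|+\|B\|$ for all flats $A,B$. *)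

theory Defs
  imports Main
begin

definition liner :: "'a set \<Rightarrow> 'a set set \<Rightarrow> bool" where
  "liner X L \<equiv>
     (\<forall>\<Lambda>\<in>L. \<Lambda> \<subseteq> X \<and> (\<exists>x y. x \<noteq> y \<and> x \<in> \<Lambda> \<and> y \<in> \<Lambda>)) \<and>
     (\<forall>x\<in>X. \<forall>y\<in>X. x \<noteq> y \<longrightarrow> (\<exists>!\<Lambda>. \<Lambda> \<in> L \<and> x \<in> \<Lambda> \<and> y \<in> \<Lambda>))"

definition line_through :: "'a set set \<Rightarrow> 'a \<Rightarrow> 'a \<Rightarrow> 'a set" where
  "line_through L x y \<equiv> (if x = y then {x} else (THE \<Lambda>. \<Lambda> \<in> L \<and> x \<in> \<Lambda> \<and> y \<in> \<Lambda>))"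

definition flat :: "'a set \<Rightarrow> 'a set set \<Rightarrow> 'a set \<Rightarrow> bool" where
  "flat X L A \<equiv> A \<subseteq> X \<and> (\<forall>x\<in>A. \<forall>y\<in>A. x \<noteq> y \<longrightarrow> line_through L x y \<subseteq> A)"

definition flat_hull :: "'a set \<Rightarrow> 'a set set \<Rightarrow> 'a set \<Rightarrow> 'a set" where
  "flat_hull X L A \<equiv> \<Inter>{F. flat X L F \<and> A \<subseteq> F}"

definition generators :: "'a set \<Rightarrow> 'a set set \<Rightarrow> 'a set \<Rightarrow> 'a set set" where
  "generators X L A \<equiv> {B. B \<subseteq> X \<and> A \<subseteq> flat_hull X L B}"

text \<open>A generating set of smallest cardinality; its cardinality is the rank.\<close>
definition rank_witness :: "'a set \<Rightarrow> 'a set set \<Rightarrow> 'a set \<Rightarrow> 'a set" where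
  "rank_witness X L A \<equiv> (SOME B. B \<in> generators X L A \<and>
      (\<forall>C\<in>generators X L A. (card_of B, card_of C) \<in> ordLeq))"

definition rank_is :: "'a set \<Rightarrow> 'a set set \<Rightarrow> 'a set \<Rightarrow> nat \<Rightarrow> bool" where
  "rank_is X L A n \<equiv>
     (\<exists>B\<in>generators X L A. finite B \<and> card B = n) \<and>
     (\<forall>B\<in>generators X L A. finite B \<longrightarrow> n \<le> card B)"

definition plane :: "'a set \<Rightarrow> 'a set set \<Rightarrow> 'a set \<Rightarrow> bool" where
  "plane X L P \<equiv> flat X L P \<and> rank_is X L P 3"

definition parallels_in :: "'a set \<Rightarrow> 'a set set \<Rightarrow> 'a set \<Rightarrow> 'a set \<Rightarrow> 'a \<Rightarrow> 'a set set" where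
  "parallels_in X L P M x \<equiv> {\<Lambda>\<in>L. x \<in> \<Lambda> \<and> \<Lambda> \<subseteq> P - M}"

definition hypoparallel :: "nat \<Rightarrow> 'a set \<Rightarrow> 'a set set \<Rightarrow> bool" where
  "hypoparallel \<kappa> X L \<equiv> \<forall>P M x. plane X L P \<and> M \<in> L \<and> M \<subseteq> P \<and> x \<in> P - M \<longrightarrow>
      finite (parallels_in X L P M x) \<and> card (parallels_in X L P M x) \<le> \<kappa>"

definition parallel :: "nat \<Rightarrow> 'a set \<Rightarrow> 'a set set \<Rightarrow> bool" where
  "parallel \<kappa> X L \<equiv> \<forall>P M x. plane X L P \<and> M \<in> L \<and> M \<subseteq> P \<and> x \<in> P - M \<longrightarrow>
      finite (parallels_in X L P M x) \<and> card (parallels_in X L P M x) = \<kappa>"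

definition skew :: "'a set \<Rightarrow> 'a set set \<Rightarrow> 'a set \<Rightarrow> 'a set \<Rightarrow> bool" where
  "skew X L A B \<equiv> rank_is X L (A \<union> B) 4"

definition projective :: "'a set \<Rightarrow> 'a set set \<Rightarrow> bool" where
  "projective X L \<equiv> \<forall>w\<in>X. \<forall>x\<in>X. \<forall>y\<in>X. \<forall>p\<in>line_through L x y.
      \<forall>v\<in>line_through L w y - {p}. line_through L v p \<inter> line_through L w x \<noteq> {}"

definition strongly_regular :: "'a set \<Rightarrow> 'a set set \<Rightarrow> bool" where
  "strongly_regular X L \<equiv> \<forall>A b. flat X L A \<and> A \<noteq> {} \<and> b \<in> X - A \<longrightarrow>
      flat_hull X L (A \<union> {b}) = (\<Union>a\<in>A. line_through L a b)"

text \<open>Modularity with cardinal arithmetic: the cardinal sums are compared via disjoint unions.\<close>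
definition modular :: "'a set \<Rightarrow> 'a set set \<Rightarrow> bool" where
  "modular X L \<equiv> \<forall>A B. flat X L A \<and> flat X L B \<longrightarrow>
      (card_of (rank_witness X L (A \<inter> B) <+> rank_witness X L (A \<union> B)),
       card_of (rank_witness X L A <+> rank_witness X L B)) \<in> ordIso"

end

theory Submission
  imports Defs
begin


locale lnr =
  fixes X :: "'a set" and L :: "'a set set"
  assumes lin: "liner X L"
begin

abbreviation ln where "ln x y \<equiv> line_through L x y"
abbreviation hl where "hl A \<equiv> flat_hull X L A"
abbreviation fl where "fl A \<equiv> flat X L A"

lemma uniq: "\<forall>x\<in>X. \<forall>y\<in>X. x \<noteq> y \<longrightarrow> (\<exists>!\<Lambda>. \<Lambda> \<in> L \<and> x \<in> \<Lambda> \<and> y \<in> \<Lambda>)"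
  using lin unfolding liner_def by (rule conjunct2)

lemma L_sub: "\<Lambda> \<in> L \<Longrightarrow> \<Lambda> \<subseteq> X"
  using lin unfolding liner_def by blast

lemma L_two: "\<Lambda> \<in> L \<Longrightarrow> \<exists>x y. x \<noteq> y \<and> x \<in> \<Lambda> \<and> y \<in> \<Lambda>"
  using lin unfolding liner_def by blast

lemma line_in:
  assumes "x \<in> X" "y \<in> X" "x \<noteq> y"
  shows "ln x y \<in> L \<and> x \<in> ln x y \<and> y \<in> ln x y"
proof -
  have "\<exists>!\<Lambda>. \<Lambda> \<in> L \<and> x \<in> \<Lambda> \<and> y \<in> \<Lambda>" using uniq assms by simp
  note ex1 = this
  have e: "ln x y = (THE \<Lambda>. \<Lambda> \<in> L \<and> x \<in> \<Lambda> \<and> y \<in> \<Lambda>)"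
    unfolding line_through_def using assms(3) by (rule if_not_P)
  from theI'[OF ex1] show ?thesis unfolding e .
qed

lemma line_eq:
  assumes "\<Lambda> \<in> L" "x \<in> \<Lambda>" "y \<in> \<Lambda>" "x \<noteq> y"
  shows "ln x y = \<Lambda>"
proof -
  have xy: "x \<in> X" "y \<in> X" using assms L_sub by auto
  have "\<exists>!\<Lambda>. \<Lambda> \<in> L \<and> x \<in> \<Lambda> \<and> y \<in> \<Lambda>" using uniq xy assms by simp
  note ex1 = this
  have e: "ln x y = (THE \<Lambda>. \<Lambda> \<in> L \<and> x \<in> \<Lambda> \<and> y \<in> \<Lambda>)"
    unfolding line_through_def using assms(4) by (rule if_not_P)
  from the1_equality[OF ex1] show ?thesis unfolding e using assms by blast
qed

lemma line_mem1: "x \<in> X \<Longrightarrow> y \<in> X \<Longrightarrow> x \<in> ln x y"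
  using line_in by (cases "x = y") (auto simp: line_through_def)

lemma line_mem2: "x \<in> X \<Longrightarrow> y \<in> X \<Longrightarrow> y \<in> ln x y"
  using line_in by (cases "x = y") (auto simp: line_through_def)

lemma line_sub: "x \<in> X \<Longrightarrow> y \<in> X \<Longrightarrow> ln x y \<subseteq> X"
  using line_in L_sub by (cases "x = y") (auto simp: line_through_def)

lemma line_refl[simp]: "ln x x = {x}"
  by (simp add: line_through_def)

lemma line_sym: "x \<in> X \<Longrightarrow> y \<in> X \<Longrightarrow> ln x y = ln y x"
  using line_eq[of "ln x y" y x] line_in[of x y] by (cases "x = y") auto

lemma line_eq2:
  assumes "x \<in> X" "y \<in> X" "z \<in> ln x y" "z \<noteq> x"
  shows "ln x z = ln x y"
proof -
  have "x \<noteq> y" proof assume "x = y" thus False using assms(3,4) by (simp add: line_through_def) qed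
  hence "ln x y \<in> L" "x \<in> ln x y" using line_in[OF assms(1,2)] by auto
  moreover have "x \<noteq> z" using assms(4) by simp
  ultimately show ?thesis using assms(3) by (intro line_eq) simp_all
qed

lemma line_eq3:
  assumes "x \<in> X" "y \<in> X" "u \<in> ln x y" "v \<in> ln x y" "u \<noteq> v"
  shows "ln u v = ln x y"
proof -
  have "x \<noteq> y" proof assume "x = y" thus False using assms(3,4,5) by (simp add: line_through_def) qed
  hence "ln x y \<in> L" using line_in[OF assms(1,2)] by auto
  thus ?thesis using assms(3,4,5) by (intro line_eq) simp_all
qed

lemma flat_L: "\<Lambda> \<in> L \<Longrightarrow> fl \<Lambda>"
  unfolding flat_def using L_sub line_eq by auto

lemma flat_line: "fl F \<Longrightarrow> x \<in> F \<Longrightarrow> y \<in> F \<Longrightarrow> ln x y \<subseteq> F"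
  unfolding flat_def by (cases "x = y") auto

lemma flat_X: "fl X"
  unfolding flat_def using line_sub by auto

lemma flat_sub: "fl F \<Longrightarrow> F \<subseteq> X"
  unfolding flat_def by auto

lemma flat_single: "x \<in> X \<Longrightarrow> fl {x}"
  unfolding flat_def by auto

lemma flat_empty: "fl {}"
  unfolding flat_def by auto

lemma flat_Int: "fl A \<Longrightarrow> fl B \<Longrightarrow> fl (A \<inter> B)"
  unfolding flat_def by blast

lemma hull_sup: "A \<subseteq> hl A"
  unfolding flat_hull_def by blast

lemma hull_min: "fl F \<Longrightarrow> A \<subseteq> F \<Longrightarrow> hl A \<subseteq> F"
  unfolding flat_hull_def by blast

lemma hull_sub: "A \<subseteq> X \<Longrightarrow> hl A \<subseteq> X"
  using hull_min flat_X by blast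

lemma hull_flat: assumes "A \<subseteq> X" shows "fl (hl A)"
proof -
  have "hl A \<subseteq> X" using hull_sub assms .
  moreover have "ln x y \<subseteq> hl A" if "x \<in> hl A" "y \<in> hl A" "x \<noteq> y" for x y
    using that unfolding flat_hull_def flat_def by blast
  ultimately show ?thesis unfolding flat_def by blast
qed

lemma hull_mono: "A \<subseteq> B \<Longrightarrow> B \<subseteq> X \<Longrightarrow> hl A \<subseteq> hl B"
  using hull_min hull_flat hull_sup by (meson order_trans)

lemma hull_flat_eq: "fl F \<Longrightarrow> hl F = F"
  using hull_min hull_sup by blast

lemma hull_hull: "A \<subseteq> X \<Longrightarrow> hl (hl A) = hl A"
  using hull_flat_eq hull_flat by blast

lemma hull_Un_hull:
  assumes "A \<subseteq> X" "B \<subseteq> X" shows "hl (hl A \<union> B) = hl (A \<union> B)"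
proof
  show "hl (hl A \<union> B) \<subseteq> hl (A \<union> B)"
    apply (rule hull_min[OF hull_flat])
    using assms hull_sup[of "A \<union> B"] hull_mono[of A "A \<union> B"] by auto
  show "hl (A \<union> B) \<subseteq> hl (hl A \<union> B)"
    apply (rule hull_mono) using hull_sup hull_sub assms by auto
qed

lemma hull_empty[simp]: "hl {} = {}"
  using hull_flat_eq flat_empty by blast

lemma hull_single: "x \<in> X \<Longrightarrow> hl {x} = {x}"
  using hull_flat_eq flat_single by blast

lemma flat_ln: "x \<in> X \<Longrightarrow> y \<in> X \<Longrightarrow> fl (ln x y)"
  using flat_L line_in flat_single by (cases "x = y") auto

lemma hull_pair: assumes "x \<in> X" "y \<in> X" shows "hl {x,y} = ln x y"
proof
  show "hl {x,y} \<subseteq> ln x y"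
    by (rule hull_min[OF flat_ln[OF assms]]) (use line_mem1[OF assms] line_mem2[OF assms] in simp)
  have "{x,y} \<subseteq> X" using assms by simp
  from flat_line[OF hull_flat[OF this]] hull_sup[of "{x,y}"]
  show "ln x y \<subseteq> hl {x,y}" by simp
qed

lemma line_sub_hull: "A \<subseteq> X \<Longrightarrow> x \<in> hl A \<Longrightarrow> y \<in> hl A \<Longrightarrow> ln x y \<subseteq> hl A"
  using flat_line hull_flat by blast

end



context lnr begin

abbreviation gens where "gens S \<equiv> generators X L S"
abbreviation rw where "rw S \<equiv> rank_witness X L S"

lemma gens_self: "S \<subseteq> X \<Longrightarrow> S \<in> gens S"
  unfolding generators_def using hull_sup by blast

lemma RW_min:
  assumes "S \<subseteq> X"
  shows "rw S \<in> gens S \<and> (\<forall>C\<in>gens S. (card_of (rw S), card_of C) \<in> ordLeq)"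
proof -
  have ex: "\<exists>B. B \<in> gens S \<and> (\<forall>C\<in>gens S. (card_of B, card_of C) \<in> ordLeq)"
  proof -
    have "card_of S \<in> card_of ` gens S" using gens_self[OF assms] by blast
    then obtain z where z: "z \<in> card_of ` gens S" and zm: "\<And>y. (y, z) \<in> ordLess \<Longrightarrow> y \<notin> card_of ` gens S"
      using wf_ordLess unfolding wf_eq_minimal by metis
    then obtain B where B: "B \<in> gens S" "z = card_of B" by blast
    have "(card_of B, card_of C) \<in> ordLeq" if "C \<in> gens S" for C
    proof -
      have "(card_of C, card_of B) \<notin> ordLess" using zm[of "card_of C"] that B by blast
      thus ?thesis using not_ordLess_iff_ordLeq[OF card_of_Well_order card_of_Well_order] by blast
    qed
    thus ?thesis using B by blast
  qed
  show ?thesis unfolding rank_witness_def by (rule someI_ex[OF ex])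
qed

lemma RW_fin:
  assumes "S \<subseteq> X" "G \<in> gens S" "finite G"
  shows "finite (rw S) \<and> card (rw S) \<le> card G"
proof -
  have le: "(card_of (rw S), card_of G) \<in> ordLeq" using RW_min[OF assms(1)] assms(2) by blast
  hence "finite (rw S)" using card_of_ordLeq_finite assms(3) by blast
  moreover obtain f where "inj_on f (rw S)" "f ` rw S \<subseteq> G" using le card_of_ordLeq by metis
  ultimately show ?thesis using card_inj_on_le assms(3) by blast
qed

lemma gensD: "H \<in> gens S \<Longrightarrow> H \<subseteq> X \<and> S \<subseteq> hl H"
  unfolding generators_def by blast

lemma gensI: "H \<subseteq> X \<Longrightarrow> S \<subseteq> hl H \<Longrightarrow> H \<in> gens S"
  unfolding generators_def by blast

lemma small:
  assumes "finite H" "H \<subseteq> X" "card H \<le> 2" "\<Lambda> \<in> L" "\<Lambda> \<subseteq> hl H"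
  shows "hl H = \<Lambda> \<and> card H = 2"
proof -
  obtain a b where ab: "a \<noteq> b" "a \<in> \<Lambda>" "b \<in> \<Lambda>" using L_two[OF assms(4)] by blast
  have "card H = 0 \<or> card H = 1 \<or> card H = 2" using assms(3) by linarith
  moreover have "card H \<noteq> 0"
  proof
    assume "card H = 0" hence "H = {}" using assms(1) by simp
    thus False using assms(5) ab by simp
  qed
  moreover have "card H \<noteq> 1"
  proof
    assume "card H = 1" then obtain p where "H = {p}" by (rule card_1_singletonE)
    hence "hl H = {p}" using hull_single assms(2) by simp
    hence s: "\<Lambda> \<subseteq> {p}" using assms(5) by simp
    have "a = p" using s ab(2) by blast
    moreover have "b = p" using s ab(3) by blast
    ultimately show False using ab(1) by simp
  qed
  moreover have "card H = 2 \<Longrightarrow> hl H = \<Lambda>"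
  proof -
    assume "card H = 2" then obtain p q where pq: "H = {p,q}" "p \<noteq> q" by (meson card_2_iff)
    have pqX: "p \<in> X" "q \<in> X" using pq assms(2) by auto
    have h: "hl H = ln p q" using hull_pair[OF pqX] pq by simp
    have "ln p q \<in> L" using line_in[OF pqX pq(2)] by blast
    hence "ln a b = ln p q" using line_eq[of "ln p q" a b] ab assms(5) h by blast
    moreover have "ln a b = \<Lambda>" using line_eq[OF assms(4) ab(2,3,1)] .
    ultimately show ?thesis using h by simp
  qed
  ultimately show ?thesis by blast
qed

lemma two_lines_small:
  assumes "finite H" "H \<subseteq> X" "card H \<le> 2" "A \<in> L" "B \<in> L" "A \<union> B \<subseteq> hl H"
  shows "A = B"
  using small[OF assms(1-4)] small[OF assms(1-3,5)] assms(6) by auto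

lemma hp_iff: "hypoparallel 0 X L \<longleftrightarrow> parallel 0 X L"
  unfolding hypoparallel_def parallel_def by simp

lemma disj_gen4:
  assumes "A \<in> L" "B \<in> L" "A \<inter> B = {}"
  shows "\<exists>G\<in>gens (A \<union> B). finite G \<and> card G = 4"
proof -
  obtain a1 a2 where a: "a1 \<noteq> a2" "a1 \<in> A" "a2 \<in> A" using L_two[OF assms(1)] by blast
  obtain b1 b2 where b: "b1 \<noteq> b2" "b1 \<in> B" "b2 \<in> B" using L_two[OF assms(2)] by blast
  let ?G = "{a1,a2,b1,b2}"
  have GX: "?G \<subseteq> X" using a b L_sub assms by blast
  have d: "a1 \<notin> B" "a2 \<notin> B" using a assms(3) by blast+
  hence "a1 \<noteq> b1" "a1 \<noteq> b2" "a2 \<noteq> b1" "a2 \<noteq> b2" using b by blast+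
  hence "card ?G = 4" using a(1) b(1) by simp
  moreover have "A \<subseteq> hl ?G"
  proof -
    have "ln a1 a2 \<subseteq> hl ?G" using line_sub_hull[OF GX] hull_sup[of ?G] by blast
    thus ?thesis using line_eq[OF assms(1) a(2,3,1)] by simp
  qed
  moreover have "B \<subseteq> hl ?G"
  proof -
    have "ln b1 b2 \<subseteq> hl ?G" using line_sub_hull[OF GX] hull_sup[of ?G] by blast
    thus ?thesis using line_eq[OF assms(2) b(2,3,1)] by simp
  qed
  ultimately have "?G \<in> gens (A \<union> B)" "card ?G = 4" using GX gensI[of ?G "A \<union> B"] by auto
  moreover have "finite ?G" by simp
  ultimately show ?thesis by blast
qed

lemma par_skew:
  assumes par: "parallel 0 X L" and AB: "A \<in> L" "B \<in> L" "A \<inter> B = {}"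
  shows "skew X L A B"
proof -
  have lb: "4 \<le> card H" if H: "H \<in> gens (A \<union> B)" "finite H" for H
  proof (rule ccontr)
    assume "\<not> 4 \<le> card H"
    hence c3: "card H \<le> 3" by simp
    have HX: "H \<subseteq> X" and ABH: "A \<union> B \<subseteq> hl H" using gensD[OF H(1)] by auto
    have ne: "A \<noteq> B" using AB L_two by blast
    have c2: "\<not> card H \<le> 2" using two_lines_small[OF H(2) HX _ AB(1,2) ABH] ne by blast
    hence c: "card H = 3" using c3 by simp
    let ?P = "hl H"
    have pl: "plane X L ?P"
      unfolding plane_def rank_is_def
    proof (intro conjI)
      show "fl ?P" using hull_flat[OF HX] .
      show "\<exists>B\<in>gens ?P. finite B \<and> card B = 3" using gensI[OF HX, of ?P] H(2) c by blast
      show "\<forall>B\<in>gens ?P. finite B \<longrightarrow> 3 \<le> card B"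
      proof (intro ballI impI)
        fix H' assume H': "H' \<in> gens ?P" "finite H'"
        have HX': "H' \<subseteq> X" and PH': "?P \<subseteq> hl H'" using gensD[OF H'(1)] by auto
        have "A \<union> B \<subseteq> hl H'" using ABH PH' by (rule order_trans)
        show "3 \<le> card H'"
        proof (rule ccontr)
          assume "\<not> 3 \<le> card H'" hence "card H' \<le> 2" by simp
          from two_lines_small[OF H'(2) HX' this AB(1,2) \<open>A \<union> B \<subseteq> hl H'\<close>] ne show False by simp
        qed
      qed
    qed
    obtain b1 where b1: "b1 \<in> B" using L_two[OF AB(2)] by blast
    have "b1 \<in> ?P - A" using b1 ABH AB(3) by blast
    moreover have "A \<subseteq> ?P" using ABH by simp
    ultimately have fc: "finite (parallels_in X L ?P A b1) \<and> card (parallels_in X L ?P A b1) = 0"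
    proof -
      have "plane X L ?P \<and> A \<in> L \<and> A \<subseteq> ?P \<and> b1 \<in> ?P - A \<longrightarrow>
        finite (parallels_in X L ?P A b1) \<and> card (parallels_in X L ?P A b1) = 0"
        using par unfolding parallel_def by blast
      thus ?thesis using pl AB(1) \<open>A \<subseteq> ?P\<close> \<open>b1 \<in> ?P - A\<close> by blast
    qed
    have "B \<subseteq> ?P" using ABH by simp
    hence "B \<subseteq> ?P - A" using AB(3) by blast
    hence "B \<in> parallels_in X L ?P A b1" unfolding parallels_in_def using AB(2) b1 by simp
    moreover have "parallels_in X L ?P A b1 = {}" using fc card_eq_0_iff by blast
    ultimately show False by simp
  qed
  show ?thesis unfolding skew_def rank_is_def
  proof (intro conjI ballI impI)
    show "\<exists>G\<in>gens (A \<union> B). finite G \<and> card G = 4" by (rule disj_gen4[OF AB])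
    show "4 \<le> card H" if "H \<in> gens (A \<union> B)" "finite H" for H using lb that .
  qed
qed

lemma skew_par:
  assumes sk: "\<forall>A\<in>L. \<forall>B\<in>L. A \<inter> B = {} \<longrightarrow> skew X L A B"
  shows "parallel 0 X L"
  unfolding parallel_def
proof (intro allI impI)
  fix P M x assume a: "plane X L P \<and> M \<in> L \<and> M \<subseteq> P \<and> x \<in> P - M"
  have "parallels_in X L P M x = {}"
  proof (rule ccontr)
    assume "parallels_in X L P M x \<noteq> {}"
    then obtain \<Lambda> where \<Lambda>: "\<Lambda> \<in> L" "\<Lambda> \<subseteq> P - M" unfolding parallels_in_def by blast
    have "\<Lambda> \<inter> M = {}" using \<Lambda>(2) by blast
    hence "skew X L \<Lambda> M" using sk \<Lambda>(1) a by simp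
    hence lb: "\<forall>H\<in>gens (\<Lambda> \<union> M). finite H \<longrightarrow> 4 \<le> card H" unfolding skew_def rank_is_def by (rule conjunct2)
    have "plane X L P" using a by simp
    hence "rank_is X L P 3" unfolding plane_def by simp
    hence "\<exists>G\<in>gens P. finite G \<and> card G = 3" unfolding rank_is_def by (rule conjunct1)
    then obtain G where G: "G \<in> gens P" "finite G" "card G = 3" by blast
    have GX: "G \<subseteq> X" and PG: "P \<subseteq> hl G" using gensD[OF G(1)] by auto
    have "\<Lambda> \<union> M \<subseteq> P" using \<Lambda>(2) a by blast
    hence "\<Lambda> \<union> M \<subseteq> hl G" using PG by (rule order_trans)
    hence "G \<in> gens (\<Lambda> \<union> M)" using gensI[OF GX] by simp
    hence "4 \<le> card G" using lb G(2) by simp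
    thus False using G(3) by simp
  qed
  thus "finite (parallels_in X L P M x) \<and> card (parallels_in X L P M x) = 0" by simp
qed

lemma skew_proj:
  assumes sk: "\<forall>A\<in>L. \<forall>B\<in>L. A \<inter> B = {} \<longrightarrow> skew X L A B"
  shows "projective X L"
  unfolding projective_def
proof (intro ballI)
  fix w x y p v assume w: "w \<in> X" and x: "x \<in> X" and y: "y \<in> X" and p: "p \<in> ln x y" and v: "v \<in> ln w y - {p}"
  have pX: "p \<in> X" using p line_sub[OF x y] by blast
  have vX: "v \<in> X" using v line_sub[OF w y] by blast
  have vp: "v \<noteq> p" using v by blast
  show "ln v p \<inter> ln w x \<noteq> {}"
  proof (cases "w = x")
    case True
    show ?thesis
    proof (cases "w = y")
      case True
      then show ?thesis using \<open>w = x\<close> p v by simp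
    next
      case False
      have "p \<in> ln w y" using p True by simp
      hence "ln v p = ln w y" using line_eq3[OF w y _ _ vp] v by blast
      thus ?thesis using line_mem1[OF w y] True by auto
    qed
  next
    case False
    show ?thesis
    proof
      assume disj: "ln v p \<inter> ln w x = {}"
      have L1: "ln v p \<in> L" using line_in[OF vX pX vp] by blast
      have L2: "ln w x \<in> L" using line_in[OF w x False] by blast
      have "skew X L (ln v p) (ln w x)" using sk L1 L2 disj by simp
      hence lb: "\<forall>H\<in>gens (ln v p \<union> ln w x). finite H \<longrightarrow> 4 \<le> card H" unfolding skew_def rank_is_def by (rule conjunct2)
      let ?G = "{w,x,y}"
      have GX: "?G \<subseteq> X" using w x y by simp
      have "ln x y \<subseteq> hl ?G" "ln w y \<subseteq> hl ?G" "ln w x \<subseteq> hl ?G"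
        using line_sub_hull[OF GX] hull_sup[of ?G] by auto
      hence "v \<in> hl ?G" "p \<in> hl ?G" using p v by auto
      hence "ln v p \<subseteq> hl ?G" using line_sub_hull[OF GX] by blast
      hence "ln v p \<union> ln w x \<subseteq> hl ?G" using \<open>ln w x \<subseteq> hl ?G\<close> by simp
      hence "?G \<in> gens (ln v p \<union> ln w x)" using gensI[OF GX] by simp
      hence "4 \<le> card ?G" using lb by simp
      moreover have "card ?G \<le> 3" by (simp add: card_insert_le_m1)
      ultimately show False by simp
    qed
  qed
qed

lemma mod_skew:
  assumes md: "modular X L" and AB: "A \<in> L" "B \<in> L" "A \<inter> B = {}"
  shows "skew X L A B"
proof -
  have AX: "A \<subseteq> X" and BX: "B \<subseteq> X" using AB L_sub by auto
  have iso: "(card_of (rw (A \<inter> B) <+> rw (A \<union> B)), card_of (rw A <+> rw B)) \<in> ordIso"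
    using md flat_L AB unfolding modular_def by blast
  have "finite (rw {}) \<and> card (rw {}) = 0" using RW_fin[of "{}" "{}"] gensI[of "{}" "{}"] by simp
  hence "rw {} = {}" using card_eq_0_iff[of "rw {}"] by blast
  hence e: "rw (A \<inter> B) = {}" using AB(3) by simp
  have cA: "finite (rw A) \<and> card (rw A) = 2" if AL: "A \<in> L" for A
  proof -
    have AX: "A \<subseteq> X" using that L_sub by auto
    obtain a1 a2 where a: "a1 \<noteq> a2" "a1 \<in> A" "a2 \<in> A" using L_two[OF AL] by blast
    have "{a1,a2} \<subseteq> X" using a AX by auto
    moreover have "A \<subseteq> hl {a1,a2}" using hull_pair[of a1 a2] a AX line_eq[OF AL a(2,3,1)] by auto
    ultimately have G: "{a1,a2} \<in> gens A" by (rule gensI)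
    have f: "finite (rw A) \<and> card (rw A) \<le> 2" using RW_fin[OF AX G] a by simp
    have "rw A \<in> gens A" using RW_min[OF AX] by blast
    hence "rw A \<subseteq> X" "A \<subseteq> hl (rw A)" using gensD by auto
    thus ?thesis using small[of "rw A" A] f AL by simp
  qed
  obtain G where G: "G \<in> gens (A \<union> B)" "finite G" "card G = 4" using disj_gen4[OF AB] by blast
  have ABX: "A \<union> B \<subseteq> X" using AX BX by simp
  have fU: "finite (rw (A \<union> B))" using RW_fin[OF ABX G(1,2)] by blast
  obtain f where "bij_betw f (rw (A \<inter> B) <+> rw (A \<union> B)) (rw A <+> rw B)"
    using iso card_of_ordIso by blast
  hence "card (rw (A \<inter> B) <+> rw (A \<union> B)) = card (rw A <+> rw B)" by (rule bij_betw_same_card)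
  hence c4: "card (rw (A \<union> B)) = 4" using cA[OF AB(1)] cA[OF AB(2)] fU e by (simp add: card_Plus)
  show ?thesis unfolding skew_def rank_is_def
  proof (intro conjI)
    show "\<exists>B'\<in>gens (A \<union> B). finite B' \<and> card B' = 4" using RW_min[OF ABX] fU c4 by blast
    show "\<forall>B'\<in>gens (A \<union> B). finite B' \<longrightarrow> 4 \<le> card B'" using RW_fin[OF ABX] c4 by metis
  qed
qed

end



context lnr begin

lemma veb:
  assumes pj: "projective X L" and A: "fl A" and b: "b \<in> X" "b \<notin> A"
    and a1: "a1 \<in> A" and a2: "a2 \<in> A" and u: "u \<in> ln a1 b" and w: "w \<in> ln a2 b"
    and ua: "u \<noteq> a1" and ub: "u \<noteq> b" and wb: "w \<noteq> b" and uw: "u \<noteq> w" and z: "z \<in> ln u w"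
  shows "\<exists>a\<in>A. z \<in> ln a b"
proof -
  have AX: "A \<subseteq> X" using A flat_sub by blast
  have a1X: "a1 \<in> X" and a2X: "a2 \<in> X" using a1 a2 AX by auto
  have uX: "u \<in> X" using u line_sub[OF a1X b(1)] by blast
  have wX: "w \<in> X" using w line_sub[OF a2X b(1)] by blast
  show ?thesis
  proof (cases "z = b")
    case True
    thus ?thesis using a1 line_mem2[OF a1X b(1)] by blast
  next
    case zb: False
    have "w \<in> ln a2 b - {u}" using w uw by blast
    hence "ln w u \<inter> ln a2 a1 \<noteq> {}" using pj a2X a1X b(1) u unfolding projective_def by blast
    then obtain q where q1: "q \<in> ln w u" and q2: "q \<in> ln a2 a1" by blast
    have qA: "q \<in> A" using q2 flat_line[OF A a2 a1] by blast
    have q1': "q \<in> ln u w" using q1 line_sym[OF uX wX] by simp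
    have e1: "ln a1 u = ln a1 b" using line_eq2[OF a1X b(1) u] ua by simp
    have qu: "q \<noteq> u"
    proof
      assume "q = u"
      hence "ln a1 u \<subseteq> A" using flat_line[OF A a1] qA by simp
      moreover have "b \<in> ln a1 u" using e1 line_mem2[OF a1X b(1)] by simp
      ultimately show False using b by blast
    qed
    show ?thesis
    proof (cases "z = q")
      case True
      have "z \<in> X" using qA AX True by blast
      thus ?thesis using qA True line_mem1[OF _ b(1)] by blast
    next
      case zq: False
      have qX: "q \<in> X" using qA AX by blast
      have bl: "b \<in> ln a1 u" using e1 line_mem2[OF a1X b(1)] by simp
      have e2: "ln q u = ln u w" using line_eq3[OF uX wX q1' line_mem1[OF uX wX] qu] .
      have "z \<in> ln q u - {b}" using e2 z zb by blast
      hence "ln z b \<inter> ln q a1 \<noteq> {}" using pj qX a1X uX bl unfolding projective_def by blast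
      then obtain r where r1: "r \<in> ln z b" and r2: "r \<in> ln q a1" by blast
      have rA: "r \<in> A" using r2 flat_line[OF A qA a1] by blast
      have rb: "r \<noteq> b" using rA b by blast
      have zX: "z \<in> X" using z line_sub[OF uX wX] by blast
      have "ln r b = ln z b" using line_eq3[OF zX b(1) r1 line_mem2[OF zX b(1)] rb] .
      hence "z \<in> ln r b" using line_mem1[OF zX b(1)] by simp
      thus ?thesis using rA by blast
    qed
  qed
qed

lemma proj_sr:
  assumes pj: "projective X L"
  shows "strongly_regular X L"
  unfolding strongly_regular_def
proof (intro allI impI)
  fix A b assume h: "fl A \<and> A \<noteq> {} \<and> b \<in> X - A"
  have A: "fl A" and Ane: "A \<noteq> {}" and bX: "b \<in> X" and bA: "b \<notin> A" using h by auto
  have AX: "A \<subseteq> X" using A flat_sub by blast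
  let ?S = "\<Union>a\<in>A. ln a b"
  have ABX: "A \<union> {b} \<subseteq> X" using AX bX by simp
  have S1: "?S \<subseteq> hl (A \<union> {b})"
  proof
    fix z assume "z \<in> ?S"
    then obtain a where a: "a \<in> A" "z \<in> ln a b" by blast
    have "a \<in> hl (A \<union> {b})" "b \<in> hl (A \<union> {b})" using a(1) hull_sup[of "A \<union> {b}"] by auto
    thus "z \<in> hl (A \<union> {b})" using line_sub_hull[OF ABX] a(2) by blast
  qed
  have SX: "?S \<subseteq> X" using line_sub AX bX by blast
  have AS: "A \<union> {b} \<subseteq> ?S"
  proof -
    have "A \<subseteq> ?S" using line_mem1 AX bX by blast
    moreover obtain a0 where "a0 \<in> A" using Ane by blast
    hence "b \<in> ?S" using line_mem2 AX bX by blast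
    ultimately show ?thesis by blast
  qed
  have flS: "fl ?S"
    unfolding flat_def
  proof (intro conjI)
    show "?S \<subseteq> X" by (rule SX)
    show "\<forall>u\<in>?S. \<forall>w\<in>?S. u \<noteq> w \<longrightarrow> ln u w \<subseteq> ?S"
    proof (intro ballI impI subsetI)
    fix u w z assume u: "u \<in> ?S" and w: "w \<in> ?S" and uw: "u \<noteq> w" and z: "z \<in> ln u w"
    obtain a1 where a1: "a1 \<in> A" "u \<in> ln a1 b" using u by blast
    obtain a2 where a2: "a2 \<in> A" "w \<in> ln a2 b" using w by blast
    have a1X: "a1 \<in> X" and a2X: "a2 \<in> X" using a1 a2 AX by auto
    have uX: "u \<in> X" using u SX by blast
    have wX: "w \<in> X" using w SX by blast
    have "\<exists>a\<in>A. z \<in> ln a b"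
    proof (cases "u = b")
      case True
      have "ln b w = ln a2 b" using line_eq3[OF a2X bX line_mem2[OF a2X bX] a2(2)] uw True by simp
      thus ?thesis using z True a2(1) by auto
    next
      case ub: False
      show ?thesis
      proof (cases "w = b")
        case True
        have "ln u b = ln a1 b" using line_eq3[OF a1X bX a1(2) line_mem2[OF a1X bX]] uw True by simp
        thus ?thesis using z True a1(1) by auto
      next
        case wb: False
        show ?thesis
        proof (cases "u = a1")
          case ua: True
          show ?thesis
          proof (cases "w = a2")
            case True
            have "z \<in> A" using z ua True flat_line[OF A a1(1) a2(1)] by blast
            thus ?thesis using line_mem1[OF _ bX] AX by blast
          next
            case False
            have "z \<in> ln w u" using z line_sym[OF uX wX] by simp
            thus ?thesis using veb[OF pj A bX bA a2(1) a1(1) a2(2) a1(2) False wb ub] uw by blast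
          qed
        next
          case False
          thus ?thesis using veb[OF pj A bX bA a1(1) a2(1) a1(2) a2(2) False ub wb uw z] by blast
        qed
      qed
    qed
    thus "z \<in> ?S" by blast
    qed
  qed
  have "hl (A \<union> {b}) \<subseteq> ?S" using hull_min[OF flS AS] .
  thus "hl (A \<union> {b}) = ?S" using S1 by blast
qed

end



context lnr begin

definition indep where "indep I \<equiv> I \<subseteq> X \<and> (\<forall>i\<in>I. i \<notin> hl (I - {i}))"

lemma sr':
  assumes sr: "strongly_regular X L" and F: "fl F" "F \<noteq> {}" and b: "b \<in> X"
  shows "hl (F \<union> {b}) = (\<Union>f\<in>F. ln f b)"
proof (cases "b \<in> F")
  case False
  thus ?thesis using sr F b unfolding strongly_regular_def by blast
next
  case True
  have FX: "F \<subseteq> X" using F flat_sub by blast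
  have "F \<union> {b} = F" using True by blast
  hence "hl (F \<union> {b}) = F" using hull_flat_eq[OF F(1)] by simp
  moreover have "(\<Union>f\<in>F. ln f b) \<subseteq> F" using flat_line[OF F(1) _ True] by blast
  moreover have "F \<subseteq> (\<Union>f\<in>F. ln f b)" using line_mem1 FX b by blast
  ultimately show ?thesis by blast
qed

lemma exch:
  assumes sr: "strongly_regular X L" and AX: "A \<subseteq> X" and bX: "b \<in> X" and cX: "c \<in> X"
    and bc: "b \<in> hl (insert c A)" and bA: "b \<notin> hl A"
  shows "c \<in> hl (insert b A)"
proof (cases "A = {}")
  case True
  hence "b = c" using bc hull_single[OF cX] by simp
  thus ?thesis using hull_sup by blast
next
  case False
  let ?F = "hl A"
  have F: "fl ?F" using hull_flat[OF AX] .
  have Fne: "?F \<noteq> {}" using False hull_sup[of A] by blast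
  have "hl (insert c A) = hl (?F \<union> {c})" using hull_Un_hull[OF AX, of "{c}"] cX by simp
  also have "\<dots> = (\<Union>f\<in>?F. ln f c)" using sr' [OF sr F Fne cX] .
  finally obtain f where f: "f \<in> ?F" "b \<in> ln f c" using bc by blast
  have fX: "f \<in> X" using f(1) hull_sub[OF AX] by blast
  have bf: "b \<noteq> f" using f(1) bA by blast
  show ?thesis
  proof (cases "b = c")
    case True thus ?thesis using hull_sup by blast
  next
    case False
    have e: "ln f b = ln f c" using line_eq2[OF fX cX f(2)] bf by simp
    have iX: "insert b A \<subseteq> X" using AX bX by simp
    have "f \<in> hl (insert b A)" using f(1) hull_mono[of A "insert b A"] iX by blast
    moreover have "b \<in> hl (insert b A)" using hull_sup by blast
    ultimately have "ln f b \<subseteq> hl (insert b A)" using line_sub_hull[OF iX] by blast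
    thus ?thesis using e line_mem2[OF fX cX] by blast
  qed
qed

lemma indep_empty: "indep {}"
  unfolding indep_def by simp

lemma indep_sub: "indep I \<Longrightarrow> J \<subseteq> I \<Longrightarrow> indep J"
  unfolding indep_def
proof (intro conjI ballI)
  assume a: "I \<subseteq> X \<and> (\<forall>i\<in>I. i \<notin> hl (I - {i}))" "J \<subseteq> I"
  show "J \<subseteq> X" using a by blast
  fix j assume j: "j \<in> J"
  have "hl (J - {j}) \<subseteq> hl (I - {j})" using hull_mono[of "J - {j}" "I - {j}"] a by blast
  thus "j \<notin> hl (J - {j})" using a j by blast
qed

lemma indep_insert:
  assumes sr: "strongly_regular X L" and J: "indep J" and gX: "g \<in> X" and g: "g \<notin> hl J"
  shows "indep (insert g J)"
  unfolding indep_def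
proof (intro conjI ballI)
  have JX: "J \<subseteq> X" using J unfolding indep_def by blast
  show "insert g J \<subseteq> X" using JX gX by simp
  have gJ: "g \<notin> J" using g hull_sup[of J] by blast
  fix i assume i: "i \<in> insert g J"
  show "i \<notin> hl (insert g J - {i})"
  proof (cases "i = g")
    case True
    have "insert g J - {i} = J" using True gJ by blast
    thus ?thesis using g True by simp
  next
    case False
    hence iJ: "i \<in> J" using i by blast
    have e: "insert g J - {i} = insert g (J - {i})" using False by blast
    have ni: "i \<notin> hl (J - {i})" using J iJ unfolding indep_def by blast
    show ?thesis
    proof
      assume "i \<in> hl (insert g J - {i})"
      hence "i \<in> hl (insert g (J - {i}))" using e by simp
      moreover have "J - {i} \<subseteq> X" "i \<in> X" using JX iJ by auto
      ultimately have "g \<in> hl (insert i (J - {i}))" using exch[OF sr _ _ gX _ ni] by blast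
      moreover have "insert i (J - {i}) = J" using iJ by blast
      ultimately show False using g by simp
    qed
  qed
qed

lemma steinitz:
  assumes sr: "strongly_regular X L" and G: "finite G" "G \<subseteq> X"
  shows "finite I \<Longrightarrow> indep I \<Longrightarrow> I \<subseteq> hl G \<Longrightarrow> card I \<le> card G"
proof (induction "card (I - G)" arbitrary: I rule: less_induct)
  case less
  show ?case
  proof (cases "I \<subseteq> G")
    case True thus ?thesis using card_mono G(1) by blast
  next
    case False
    then obtain i where i: "i \<in> I" "i \<notin> G" by blast
    have IX: "I \<subseteq> X" using less.prems(2) unfolding indep_def by blast
    have ni: "i \<notin> hl (I - {i})" using less.prems(2) i(1) unfolding indep_def by blast
    have "\<exists>g\<in>G - I. g \<notin> hl (I - {i})"
    proof (rule ccontr)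
      assume "\<not> ?thesis"
      hence "G - I \<subseteq> hl (I - {i})" by blast
      moreover have "G \<inter> I \<subseteq> hl (I - {i})" using i(2) hull_sup[of "I - {i}"] by blast
      ultimately have "G \<subseteq> hl (I - {i})" by blast
      hence "hl G \<subseteq> hl (I - {i})" using hull_min hull_flat[of "I - {i}"] IX by blast
      thus False using less.prems(3) i(1) ni by blast
    qed
    then obtain g where g: "g \<in> G" "g \<notin> I" "g \<notin> hl (I - {i})" by blast
    let ?I' = "insert g (I - {i})"
    have gX: "g \<in> X" using g G by blast
    have ind: "indep ?I'" using indep_insert[OF sr indep_sub[OF less.prems(2), of "I - {i}"] gX g(3)] by blast
    have fin: "finite ?I'" using less.prems(1) by simp
    have cI: "card ?I' = card I" using g(2) i(1) less.prems(1)
    proof -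
      have "card I > 0" using i(1) less.prems(1) card_gt_0_iff by blast
      thus ?thesis using g(2) i(1) less.prems(1) by (simp add: card.insert_remove)
    qed
    have sub: "?I' \<subseteq> hl G" using less.prems(3) g(1) hull_sup[of G] by blast
    have "?I' - G = (I - G) - {i}" using g(1) by blast
    hence "card (?I' - G) < card (I - G)" using i less.prems(1)
      by (metis Diff_iff card_Diff1_less finite_Diff)
    hence "card ?I' \<le> card G" using less.hyps[OF _ fin ind sub] by blast
    thus ?thesis using cI by simp
  qed
qed

lemma basis_ext:
  assumes sr: "strongly_regular X L" and G: "finite G" "G \<subseteq> X" and S: "S \<subseteq> X" "S \<subseteq> hl G"
    and I0: "finite I0" "indep I0" "I0 \<subseteq> S"
  shows "\<exists>J. indep J \<and> finite J \<and> I0 \<subseteq> J \<and> J \<subseteq> S \<and> S \<subseteq> hl J"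
proof -
  let ?P = "\<lambda>J. indep J \<and> finite J \<and> I0 \<subseteq> J \<and> J \<subseteq> S"
  have "?P I0" using I0 by blast
  moreover have "\<forall>J. ?P J \<longrightarrow> card J < Suc (card G)"
  proof (intro allI impI)
    fix J assume "?P J"
    hence "card J \<le> card G" using steinitz[OF sr G, of J] S(2) by blast
    thus "card J < Suc (card G)" by simp
  qed
  ultimately obtain J where J: "?P J" and mx: "\<forall>J'. ?P J' \<longrightarrow> card J' \<le> card J"
    using Lattices_Big.ex_has_greatest_nat[of ?P I0 card "Suc (card G)"] by blast
  have "S \<subseteq> hl J"
  proof
    fix s assume s: "s \<in> S"
    show "s \<in> hl J"
    proof (rule ccontr)
      assume ns: "s \<notin> hl J"
      have sX: "s \<in> X" using s S by blast
      have "?P (insert s J)" using J indep_insert[OF sr _ sX ns] s by blast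
      hence "card (insert s J) \<le> card J" using mx by blast
      moreover have "s \<notin> J" using ns hull_sup[of J] by blast
      ultimately show False using J by simp
    qed
  qed
  thus ?thesis using J by blast
qed

lemma rank_card:
  assumes sr: "strongly_regular X L" and S: "S \<subseteq> X" and I: "indep I" "finite I" "I \<subseteq> S" "S \<subseteq> hl I"
  shows "finite (rw S) \<and> card (rw S) = card I"
proof -
  have IX: "I \<subseteq> X" using I(1) unfolding indep_def by blast
  have "I \<in> gens S" using gensI[OF IX I(4)] .
  hence f: "finite (rw S) \<and> card (rw S) \<le> card I" using RW_fin[OF S _ I(2)] by blast
  have "rw S \<in> gens S" using RW_min[OF S] by blast
  hence "rw S \<subseteq> X" "S \<subseteq> hl (rw S)" using gensD by auto
  hence "card I \<le> card (rw S)" using steinitz[OF sr _ _ I(2,1)] f I(3) by blast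
  thus ?thesis using f by simp
qed

lemma join:
  assumes sr: "strongly_regular X L" and A: "fl A" "A \<noteq> {}" and C: "fl C" "C \<noteq> {}"
    and k: "k \<in> hl (A \<union> C)"
  shows "\<exists>a\<in>A. \<exists>c\<in>C. k \<in> ln a c"
proof -
  have AX: "A \<subseteq> X" using A flat_sub by blast
  have CX: "C \<subseteq> X" using C flat_sub by blast
  let ?S = "{z. \<exists>a\<in>A. \<exists>c\<in>C. z \<in> ln a c}"
  have SX: "?S \<subseteq> X" using line_sub AX CX by blast
  have AS: "A \<union> C \<subseteq> ?S"
  proof -
    obtain a0 where a0: "a0 \<in> A" using A by blast
    obtain c0 where c0: "c0 \<in> C" using C by blast
    have "A \<subseteq> ?S" using line_mem1 AX CX c0 by blast
    moreover have "C \<subseteq> ?S" using line_mem2 AX CX a0 by blast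
    ultimately show ?thesis by blast
  qed
  have flS: "fl ?S"
    unfolding flat_def
  proof (intro conjI)
    show "?S \<subseteq> X" by (rule SX)
    show "\<forall>u\<in>?S. \<forall>w\<in>?S. u \<noteq> w \<longrightarrow> ln u w \<subseteq> ?S"
    proof (intro ballI impI subsetI)
      fix u w z assume u: "u \<in> ?S" and w: "w \<in> ?S" and uw: "u \<noteq> w" and z: "z \<in> ln u w"
      obtain a1 c1 where ac1: "a1 \<in> A" "c1 \<in> C" "u \<in> ln a1 c1" using u by blast
      obtain a2 c2 where ac2: "a2 \<in> A" "c2 \<in> C" "w \<in> ln a2 c2" using w by blast
      have c1X: "c1 \<in> X" and c2X: "c2 \<in> X" and a2X: "a2 \<in> X" using ac1 ac2 AX CX by auto
      let ?T = "hl (A \<union> {c1})"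
      have T1X: "A \<union> {c1} \<subseteq> X" using AX c1X by simp
      have Tfl: "fl ?T" using hull_flat[OF T1X] .
      have TX: "?T \<subseteq> X" using hull_sub[OF T1X] .
      have Tne: "?T \<noteq> {}" using hull_sup[of "A \<union> {c1}"] by blast
      have Teq: "?T = (\<Union>a\<in>A. ln a c1)" using sr'[OF sr A c1X] .
      let ?H = "hl (?T \<union> {c2})"
      have H1X: "?T \<union> {c2} \<subseteq> X" using TX c2X by simp
      have Heq: "?H = (\<Union>t\<in>?T. ln t c2)" using sr'[OF sr Tfl Tne c2X] .
      have uT: "u \<in> ?T" using Teq ac1 by blast
      have TH: "?T \<subseteq> ?H" using hull_sup[of "?T \<union> {c2}"] by blast
      have a2H: "a2 \<in> ?H" using TH ac2(1) hull_sup[of "A \<union> {c1}"] by blast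
      have c2H: "c2 \<in> ?H" using hull_sup[of "?T \<union> {c2}"] by blast
      have wH: "w \<in> ?H" using line_sub_hull[OF H1X a2H c2H] ac2(3) by blast
      have zH: "z \<in> ?H" using line_sub_hull[OF H1X _ wH] uT TH z by blast
      then obtain t where t: "t \<in> ?T" "z \<in> ln t c2" using Heq by blast
      then obtain a where a: "a \<in> A" "t \<in> ln a c1" using Teq by blast
      have aX: "a \<in> X" using a AX by blast
      let ?C' = "ln c1 c2"
      have C'fl: "fl ?C'" using flat_ln[OF c1X c2X] .
      have C'ne: "?C' \<noteq> {}" using line_mem1[OF c1X c2X] by blast
      have C'C: "?C' \<subseteq> C" using flat_line[OF C(1) ac1(2) ac2(2)] .
      have C'X: "?C' \<subseteq> X" using C'C CX by blast
      let ?K = "hl (?C' \<union> {a})"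
      have K1X: "?C' \<union> {a} \<subseteq> X" using C'X aX by simp
      have Keq: "?K = (\<Union>d\<in>?C'. ln d a)" using sr'[OF sr C'fl C'ne aX] .
      have aK: "a \<in> ?K" using hull_sup[of "?C' \<union> {a}"] by blast
      have c1K: "c1 \<in> ?K" using hull_sup[of "?C' \<union> {a}"] line_mem1[OF c1X c2X] by blast
      have c2K: "c2 \<in> ?K" using hull_sup[of "?C' \<union> {a}"] line_mem2[OF c1X c2X] by blast
      have tK: "t \<in> ?K" using line_sub_hull[OF K1X aK c1K] a(2) by blast
      have zK: "z \<in> ?K" using line_sub_hull[OF K1X tK c2K] t(2) by blast
      then obtain d where d: "d \<in> ?C'" "z \<in> ln d a" using Keq by blast
      have dX: "d \<in> X" using d(1) C'X by blast
      have "z \<in> ln a d" using d(2) line_sym[OF dX aX] by simp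
      thus "z \<in> ?S" using a(1) d(1) C'C by blast
    qed
  qed
  have "hl (A \<union> C) \<subseteq> ?S" using hull_min[OF flS AS] .
  thus ?thesis using k by blast
qed

end



context lnr begin

lemma mod_fin:
  assumes sr: "strongly_regular X L" and A: "fl A" and B: "fl B"
    and fA: "finite (rw A)" and fB: "finite (rw B)"
  shows "finite (rw (A \<inter> B)) \<and> finite (rw (A \<union> B)) \<and>
         card (rw (A \<inter> B)) + card (rw (A \<union> B)) = card (rw A) + card (rw B)"
proof -
  have AX: "A \<subseteq> X" using A flat_sub by blast
  have BX: "B \<subseteq> X" using B flat_sub by blast
  have GA: "rw A \<subseteq> X" "A \<subseteq> hl (rw A)" using gensD RW_min[OF AX] by blast+
  have GB: "rw B \<subseteq> X" "B \<subseteq> hl (rw B)" using gensD RW_min[OF BX] by blast+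
  have ABX: "A \<inter> B \<subseteq> X" using AX by blast
  obtain I where I: "indep I" "finite I" "I \<subseteq> A \<inter> B" "A \<inter> B \<subseteq> hl I"
    using basis_ext[OF sr fA GA(1) ABX _ finite.emptyI indep_empty] GA(2) by blast
  obtain J1 where J1: "indep J1" "finite J1" "I \<subseteq> J1" "J1 \<subseteq> A" "A \<subseteq> hl J1"
    using basis_ext[OF sr fA GA(1) AX GA(2) I(2,1)] I(3) by blast
  obtain K1 where K1: "indep K1" "finite K1" "I \<subseteq> K1" "K1 \<subseteq> B" "B \<subseteq> hl K1"
    using basis_ext[OF sr fB GB(1) BX GB(2) I(2,1)] I(3) by blast
  define K where "K = K1 - I"
  have KK1: "K \<subseteq> K1" unfolding K_def by blast
  have KI: "K \<inter> I = {}" unfolding K_def by blast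
  have eK1: "K1 = I \<union> K" unfolding K_def using K1(3) by blast
  have IX: "I \<subseteq> X" using I(1) unfolding indep_def by blast
  have J1X: "J1 \<subseteq> X" using J1(1) unfolding indep_def by blast
  have K1X: "K1 \<subseteq> X" using K1(1) unfolding indep_def by blast
  have fK: "finite K" using K1(2) KK1 finite_subset by blast
  have KB: "K \<subseteq> B" using K1(4) KK1 by blast
  have nK1: "k \<notin> hl (K1 - {k})" if "k \<in> K" for k
  proof -
    have "k \<in> K1" using that KK1 by blast
    thus ?thesis using K1(1) unfolding indep_def by blast
  qed
  have IK1: "hl I \<subseteq> hl (K1 - {k})" if "k \<in> K" for k
  proof -
    have "I \<subseteq> K1 - {k}" using that KI K1(3) by blast
    moreover have "K1 - {k} \<subseteq> X" using K1X by blast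
    ultimately show ?thesis by (rule hull_mono)
  qed
  have KA: "k \<notin> A" if k: "k \<in> K" for k
  proof
    assume "k \<in> A"
    hence "k \<in> hl I" using KB k I(4) by blast
    thus False using IK1[OF k] nK1[OF k] by blast
  qed
  have kc: "k \<notin> hl (J1 \<union> K0)" if k: "k \<in> K" and K0: "K0 \<subseteq> K - {k}" for k K0
  proof
    assume kh: "k \<in> hl (J1 \<union> K0)"
    let ?C = "hl (I \<union> K0)"
    have K0K1: "K0 \<subseteq> K1 - {k}" using K0 KK1 by blast
    have K0X: "K0 \<subseteq> X" using K0K1 K1X by blast
    have IK0X: "I \<union> K0 \<subseteq> X" using IX K0X by simp
    have Cfl: "fl ?C" using hull_flat[OF IK0X] .
    have CX: "?C \<subseteq> X" using hull_sub[OF IK0X] .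
    have "I \<union> K0 \<subseteq> B" using K1(3,4) K0K1 by blast
    hence CB: "?C \<subseteq> B" using hull_min[OF B] by blast
    have f1: "k \<notin> ?C"
    proof
      assume "k \<in> ?C"
      moreover have "?C \<subseteq> hl (K1 - {k})"
      proof -
        have "I \<union> K0 \<subseteq> K1 - {k}" using K0K1 K1(3) k KI by blast
        moreover have "K1 - {k} \<subseteq> X" using K1X by blast
        ultimately show ?thesis by (rule hull_mono)
      qed
      ultimately show False using nK1[OF k] by blast
    qed
    have f3: "A \<inter> B \<subseteq> ?C" using I(4) hull_mono[of I "I \<union> K0"] IK0X by blast
    have f2: "k \<notin> A" using KA[OF k] .
    have ACX: "A \<union> ?C \<subseteq> X" using AX CX by simp
    have "hl (J1 \<union> K0) \<subseteq> hl (A \<union> ?C)"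
      using hull_mono[OF _ ACX, of "J1 \<union> K0"] J1(4) hull_sup[of "I \<union> K0"] by blast
    hence kAC: "k \<in> hl (A \<union> ?C)" using kh by blast
    show False
    proof (cases "A = {}")
      case True
      hence "hl (A \<union> ?C) = ?C" using hull_flat_eq[OF Cfl] by simp
      thus False using kAC f1 by simp
    next
      case Ane: False
      show False
      proof (cases "?C = {}")
        case True
        hence "hl (A \<union> ?C) = A" using hull_flat_eq[OF A] by simp
        thus False using kAC f2 by simp
      next
        case Cne: False
        obtain a c where ac: "a \<in> A" "c \<in> ?C" "k \<in> ln a c" using join[OF sr A Ane Cfl Cne kAC] by blast
        have aX: "a \<in> X" using ac AX by blast
        have cX: "c \<in> X" using ac CX by blast
        have kB: "k \<in> B" using k KB by blast
        have cB: "c \<in> B" using ac CB by blast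
        show False
        proof (cases "a = c")
          case True thus False using ac f2 by simp
        next
          case False
          have ka: "k \<noteq> a" using ac(1) f2 by blast
          have kc': "k \<noteq> c" using ac(2) f1 by blast
          have "ln k c = ln a c" using line_eq3[OF aX cX ac(3) line_mem2[OF aX cX] kc'] .
          hence "a \<in> ln k c" using line_mem1[OF aX cX] by simp
          hence "a \<in> B" using flat_line[OF B kB cB] by blast
          hence "a \<in> ?C" using f3 ac(1) by blast
          hence "ln a c \<subseteq> ?C" using flat_line[OF Cfl _ ac(2)] by blast
          thus False using ac(3) f1 by blast
        qed
      qed
    qed
  qed
  have indU: "K0 \<subseteq> K \<longrightarrow> indep (J1 \<union> K0)" if "finite K0" for K0
    using that
  proof (induction K0 rule: finite_induct)
    case empty thus ?case using J1(1) by simp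
  next
    case (insert k K0)
    show ?case
    proof
      assume s: "insert k K0 \<subseteq> K"
      hence ind: "indep (J1 \<union> K0)" using insert.IH by blast
      have k: "k \<in> K" using s by blast
      have "K0 \<subseteq> K - {k}" using s insert.hyps(2) by blast
      hence nk: "k \<notin> hl (J1 \<union> K0)" using kc[OF k] by blast
      have kX: "k \<in> X" using k KK1 K1X by blast
      have "indep (insert k (J1 \<union> K0))" using indep_insert[OF sr ind kX nk] .
      thus "indep (J1 \<union> insert k K0)" by simp
    qed
  qed
  have indJK: "indep (J1 \<union> K)" using indU[OF fK] by blast
  have JKsub: "J1 \<union> K \<subseteq> A \<union> B" using J1(4) KB by blast
  have JKX: "J1 \<union> K \<subseteq> X" using J1X KK1 K1X by blast
  have span: "A \<union> B \<subseteq> hl (J1 \<union> K)"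
  proof -
    have "hl J1 \<subseteq> hl (J1 \<union> K)" using hull_mono[OF _ JKX] by blast
    moreover have "hl K1 \<subseteq> hl (J1 \<union> K)" using hull_mono[OF _ JKX, of K1] eK1 J1(3) by blast
    ultimately show ?thesis using J1(5) K1(5) by blast
  qed
  have UX: "A \<union> B \<subseteq> X" using AX BX by simp
  have r1: "finite (rw (A \<inter> B)) \<and> card (rw (A \<inter> B)) = card I" using rank_card[OF sr ABX I] .
  have r2: "finite (rw A) \<and> card (rw A) = card J1" using rank_card[OF sr AX J1(1,2,4,5)] .
  have r3: "finite (rw B) \<and> card (rw B) = card K1" using rank_card[OF sr BX K1(1,2,4,5)] .
  have r4: "finite (rw (A \<union> B)) \<and> card (rw (A \<union> B)) = card (J1 \<union> K)"
    using rank_card[OF sr UX indJK _ JKsub span] J1(2) fK by blast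
  have dJK: "J1 \<inter> K = {}" using KA J1(4) by blast
  have c1: "card (J1 \<union> K) = card J1 + card K" using card_Un_disjoint[OF J1(2) fK dJK] .
  have dIK: "I \<inter> K = {}" using KI by blast
  have c2: "card K1 = card I + card K" using card_Un_disjoint[OF I(2) fK dIK] eK1 by simp
  show ?thesis using r1 r2 r3 r4 c1 c2 by simp
qed

lemma RW_gen: "S \<subseteq> X \<Longrightarrow> rw S \<in> gens S"
  using RW_min by blast

lemma RW_le: "S \<subseteq> X \<Longrightarrow> C \<in> gens S \<Longrightarrow> (card_of (rw S), card_of C) \<in> ordLeq"
  using RW_min by blast

lemma sr_mod:
  assumes sr: "strongly_regular X L"
  shows "modular X L"
  unfolding modular_def
proof (intro allI impI)
  fix A B assume AB: "fl A \<and> fl B"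
  have A: "fl A" and B: "fl B" using AB by auto
  have AX: "A \<subseteq> X" using A flat_sub by blast
  have BX: "B \<subseteq> X" using B flat_sub by blast
  have UX: "A \<union> B \<subseteq> X" using AX BX by simp
  have IX: "A \<inter> B \<subseteq> X" using AX by blast
  let ?RA = "rw A" and ?RB = "rw B" and ?RU = "rw (A \<union> B)" and ?RI = "rw (A \<inter> B)"
  show "(card_of (?RI <+> ?RU), card_of (?RA <+> ?RB)) \<in> ordIso"
  proof (cases "finite ?RA \<and> finite ?RB")
    case True
    have m: "finite ?RI \<and> finite ?RU \<and> card ?RI + card ?RU = card ?RA + card ?RB"
      using mod_fin[OF sr A B] True by blast
    have "card (?RI <+> ?RU) = card (?RA <+> ?RB)" using m True by (simp add: card_Plus)
    moreover have "finite (?RI <+> ?RU)" "finite (?RA <+> ?RB)" using m True by auto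
    ultimately obtain f where "bij_betw f (?RI <+> ?RU) (?RA <+> ?RB)"
      using finite_same_card_bij by metis
    thus ?thesis using card_of_ordIso[of "?RI <+> ?RU" "?RA <+> ?RB"] by blast
  next
    case False
    have RUg: "?RU \<in> gens (A \<union> B)" using RW_gen[OF UX] .
    hence RUX: "?RU \<subseteq> X" and RUs: "A \<union> B \<subseteq> hl ?RU" using gensD by auto
    have m1: "(card_of ?RA, card_of ?RU) \<in> ordLeq"
    proof -
      have "A \<subseteq> hl ?RU" using RUs by simp
      hence "?RU \<in> gens A" using gensI[OF RUX] by simp
      thus ?thesis using RW_le[OF AX] by simp
    qed
    have m1': "(card_of ?RB, card_of ?RU) \<in> ordLeq"
    proof -
      have "B \<subseteq> hl ?RU" using RUs by simp
      hence "?RU \<in> gens B" using gensI[OF RUX] by simp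
      thus ?thesis using RW_le[OF BX] by simp
    qed
    have m2: "(card_of ?RI, card_of ?RA) \<in> ordLeq"
    proof -
      have "?RA \<in> gens A" using RW_gen[OF AX] .
      hence ra: "?RA \<subseteq> X" "A \<subseteq> hl ?RA" using gensD by auto
      hence "A \<inter> B \<subseteq> hl ?RA" by blast
      hence "?RA \<in> gens (A \<inter> B)" using gensI[OF ra(1)] by simp
      thus ?thesis using RW_le[OF IX] by simp
    qed
    have m3: "(card_of ?RU, card_of (?RA <+> ?RB)) \<in> ordLeq"
    proof -
      have "?RA \<in> gens A" using RW_gen[OF AX] .
      hence a: "?RA \<subseteq> X" "A \<subseteq> hl ?RA" using gensD by auto
      have "?RB \<in> gens B" using RW_gen[OF BX] .
      hence b: "?RB \<subseteq> X" "B \<subseteq> hl ?RB" using gensD by auto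
      have uX: "?RA \<union> ?RB \<subseteq> X" using a b by simp
      have "hl ?RA \<subseteq> hl (?RA \<union> ?RB)" "hl ?RB \<subseteq> hl (?RA \<union> ?RB)" using hull_mono[OF _ uX] by auto
      hence "A \<union> B \<subseteq> hl (?RA \<union> ?RB)" using a b by blast
      hence "?RA \<union> ?RB \<in> gens (A \<union> B)" using gensI[OF uX] by simp
      hence "(card_of ?RU, card_of (?RA \<union> ?RB)) \<in> ordLeq" using RW_le[OF UX] by simp
      thus ?thesis using card_of_Un_Plus_ordLeq[of ?RA ?RB] by (rule ordLeq_transitive)
    qed
    have infU: "\<not> finite ?RU"
    proof
      assume "finite ?RU"
      hence "finite ?RA" "finite ?RB" using card_of_ordLeq_finite[OF m1] card_of_ordLeq_finite[OF m1'] by auto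
      thus False using False by blast
    qed
    have RIU: "(card_of ?RI, card_of ?RU) \<in> ordLeq" using m2 m1 by (rule ordLeq_transitive)
    have L1: "(card_of (?RI <+> ?RU), card_of ?RU) \<in> ordIso"
      using card_of_Plus_infinite2[OF infU RIU] .
    have "(card_of (?RA <+> ?RB), card_of ?RU) \<in> ordLeq"
    proof -
      have "\<not> finite (Field (card_of ?RU))" using infU by (simp add: Field_card_of)
      from card_of_Plus_ordLeq_infinite_Field[OF this m1 m1' card_of_Card_order] show ?thesis .
    qed
    hence L2: "(card_of (?RA <+> ?RB), card_of ?RU) \<in> ordIso" using m3 ordIso_iff_ordLeq by blast
    show ?thesis using L1 ordIso_symmetric[OF L2] by (rule ordIso_transitive)
  qed
qed

end


theorem theorem3p4p1:
  fixes X :: "'a set" and L :: "'a set set"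
  assumes "liner X L"
  shows "(hypoparallel 0 X L \<longleftrightarrow> parallel 0 X L)
       \<and> (parallel 0 X L \<longleftrightarrow> (\<forall>A\<in>L. \<forall>B\<in>L. A \<inter> B = {} \<longrightarrow> skew X L A B))
       \<and> ((\<forall>A\<in>L. \<forall>B\<in>L. A \<inter> B = {} \<longrightarrow> skew X L A B) \<longleftrightarrow> projective X L)
       \<and> (projective X L \<longleftrightarrow> strongly_regular X L)
       \<and> (strongly_regular X L \<longleftrightarrow> modular X L)"
proof -
  interpret lnr X L by (rule lnr.intro) (rule assms)
  let ?S3 = "\<forall>A\<in>L. \<forall>B\<in>L. A \<inter> B = {} \<longrightarrow> skew X L A B"
  have c0: "hypoparallel 0 X L \<longleftrightarrow> parallel 0 X L" by (rule hp_iff)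
  have c1: "parallel 0 X L \<Longrightarrow> ?S3" using par_skew by blast
  have c2: "?S3 \<Longrightarrow> parallel 0 X L" by (rule skew_par)
  have c3: "?S3 \<Longrightarrow> projective X L" by (rule skew_proj)
  have c4: "projective X L \<Longrightarrow> strongly_regular X L" by (rule proj_sr)
  have c5: "strongly_regular X L \<Longrightarrow> modular X L" by (rule sr_mod)
  have c6: "modular X L \<Longrightarrow> ?S3" using mod_skew by blast
  show ?thesis
  proof (intro conjI iffI)
  qed (use c0 c1 c2 c3 c4 c5 c6 in \<open>blast+\<close>)
qed

end
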